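(* Let $(V,d,k,q)$ be an instance of the individually fair $k$-center with outliers problem (IF$k$CO) as defined in the context, and let $(S,O,\sigma)$ be the solution output by the basic algorithm (Algorithm 2) described in the context. Then $$\alpha(S,O,\sigma)=\max_{i\in V\setminus O}\frac{d_{\sigma(i)i}}{NR_q(i)}\le 2.$$
   Context: IF$k$CO instance: a finite set $V$ with $|V|=n$, a metric $d$ on $V$ (nonnegative, symmetric, $d_{ii}=0$, triangle inequality), and integers $k\ge 1$ and $q\ge 0$. For $i\in V$, $NR_q(i)$ is the distance from $i$ to its $\lceil (n-q)/k\rceil$-th nearest neighbor in $V$, where $i$ counts as its own (first) nearest neighbor. A solution is $(S,O,\sigma)$ with $S,O\subseteq V$ and $\sigma:V\setminus O\to S$; its outlier-related fairness ratio is $\alpha(S,O,\sigma)=\max_{i\in V\setminus O} d_{\sigma(i)i}/NR_q(i)$. Algorithm 2: set $P:=V$, $S:=\emptyset$. While $P\neq\emptyset$ and $|S|<k$: pick $s\in P$ minimizing $NR_q(i)$ over $i\in P$; set $S:=S\cup\{s\}$ and $P:=\{i\in P: d_{is}>2\,NR_q(i)\}$. Then set $O:=P$ and, for each $i\in V\setminus O$, let $\sigma(i)$ be a center $h\in S$ minimizing $d_{ih}$. Output $(S,O,\sigma)$. *)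

theory Defs
  imports Complex_Main "HOL-Library.Multiset"
begin

definition is_metric_on :: "'a set \<Rightarrow> ('a \<Rightarrow> 'a \<Rightarrow> real) \<Rightarrow> bool" where
  "is_metric_on V d \<longleftrightarrow>
     (\<forall>i\<in>V. \<forall>j\<in>V. d i j \<ge> 0) \<and>
     (\<forall>i\<in>V. \<forall>j\<in>V. d i j = d j i) \<and>
     (\<forall>i\<in>V. d i i = 0) \<and>
     (\<forall>i\<in>V. \<forall>j\<in>V. \<forall>l\<in>V. d i l \<le> d i j + d j l)"

definition nr_rank :: "'a set \<Rightarrow> nat \<Rightarrow> nat \<Rightarrow> nat" where
  "nr_rank V k q = nat \<lceil>(real (card V) - real q) / real k\<rceil>"

text \<open>NR_q(i): distance from i to its m-th nearest neighbour in V (i itself counts,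
  being at distance 0), i.e. the m-th smallest element (1-indexed) of the multiset
  of distances from i to the points of V.\<close>
definition NR :: "'a set \<Rightarrow> ('a \<Rightarrow> 'a \<Rightarrow> real) \<Rightarrow> nat \<Rightarrow> nat \<Rightarrow> 'a \<Rightarrow> real" where
  "NR V d k q i =
     sorted_list_of_multiset (image_mset (d i) (mset_set V)) ! (nr_rank V k q - 1)"

definition alg2_step :: "'a set \<Rightarrow> ('a \<Rightarrow> 'a \<Rightarrow> real) \<Rightarrow> nat \<Rightarrow> nat
    \<Rightarrow> ('a set \<times> 'a set) \<Rightarrow> ('a set \<times> 'a set) \<Rightarrow> bool" where
  "alg2_step V d k q st st' \<longleftrightarrow>
     (let P = fst st; S = snd st in
       P \<noteq> {} \<and> card S < k \<and>
       (\<exists>s\<in>P. (\<forall>i\<in>P. NR V d k q s \<le> NR V d k q i) \<and>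
              st' = ({i\<in>P. d i s > 2 * NR V d k q i}, insert s S)))"

text \<open>(S, O) is a possible outcome of the loop (for some tie-breaking): the loop
  started at (V, {}) reaches (P, S) in which the loop condition fails, and Out = P.\<close>
definition alg2_centers_outliers :: "'a set \<Rightarrow> ('a \<Rightarrow> 'a \<Rightarrow> real) \<Rightarrow> nat \<Rightarrow> nat
    \<Rightarrow> 'a set \<Rightarrow> 'a set \<Rightarrow> bool" where
  "alg2_centers_outliers V d k q S Out \<longleftrightarrow>
     (alg2_step V d k q)\<^sup>*\<^sup>* (V, {}) (Out, S) \<and> \<not> (Out \<noteq> {} \<and> card S < k)"

definition alg2_output :: "'a set \<Rightarrow> ('a \<Rightarrow> 'a \<Rightarrow> real) \<Rightarrow> nat \<Rightarrow> nat
    \<Rightarrow> 'a set \<Rightarrow> 'a set \<Rightarrow> ('a \<Rightarrow> 'a) \<Rightarrow> bool" where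
  "alg2_output V d k q S Out \<sigma> \<longleftrightarrow>
     alg2_centers_outliers V d k q S Out \<and>
     (\<forall>i\<in>V - Out. \<sigma> i \<in> S \<and> (\<forall>h\<in>S. d i (\<sigma> i) \<le> d i h))"

definition fairness_ratio :: "'a set \<Rightarrow> ('a \<Rightarrow> 'a \<Rightarrow> real) \<Rightarrow> nat \<Rightarrow> nat
    \<Rightarrow> 'a set \<Rightarrow> ('a \<Rightarrow> 'a) \<Rightarrow> real" where
  "fairness_ratio V d k q Out \<sigma> = Max ((\<lambda>i. d (\<sigma> i) i / NR V d k q i) ` (V - Out))"

end

theory Submission
  imports Defs
begin

lemma NR_nonneg:
  assumes "finite V" "is_metric_on V d" "k \<ge> 1" "q < card V" "i \<in> V"
  shows "NR V d k q i \<ge> 0"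
proof -
  define M where "M = image_mset (d i) (mset_set V)"
  define xs where "xs = sorted_list_of_multiset M"
  have len: "length xs = card V"
  proof -
    have "length xs = size (mset xs)" by simp
    also have "mset xs = M" unfolding xs_def by simp
    finally show ?thesis unfolding M_def using assms(1) by simp
  qed
  have "real (card V) - real q \<le> real (card V) * real k"
  proof -
    have "real (card V) * 1 \<le> real (card V) * real k"
      by (rule mult_left_mono) (use assms(3) in auto)
    thus ?thesis by linarith
  qed
  hence "(real (card V) - real q) / real k \<le> real (card V)"
    using assms(3) by (simp add: divide_le_eq)
  hence "\<lceil>(real (card V) - real q) / real k\<rceil> \<le> int (card V)"
    by (simp add: ceiling_le_iff) 
  hence r: "nr_rank V k q \<le> card V" unfolding nr_rank_def by linarith
  have "card V > 0" using assms(4) by simp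
  hence idx: "nr_rank V k q - 1 < length xs" using r len by linarith
  hence "xs ! (nr_rank V k q - 1) \<in> set xs" by simp
  hence "xs ! (nr_rank V k q - 1) \<in> set_mset M" unfolding xs_def by simp
  hence "xs ! (nr_rank V k q - 1) \<in> d i ` V" unfolding M_def using assms(1) by simp
  then obtain j where "j \<in> V" "xs ! (nr_rank V k q - 1) = d i j" by auto
  moreover have "d i j \<ge> 0" using assms(2,5) \<open>j \<in> V\<close> unfolding is_metric_on_def by blast
  moreover have "NR V d k q i = xs ! (nr_rank V k q - 1)"
    by (simp only: NR_def xs_def M_def)
  ultimately show ?thesis by simp
qed

lemma inv:
  assumes "(alg2_step V d k q)\<^sup>*\<^sup>* (V, {}) st"
    and "\<And>i. i \<in> V \<Longrightarrow> NR V d k q i \<ge> 0"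
    and "\<forall>i\<in>V. d i i = 0"
  shows "fst st \<subseteq> V \<and> snd st \<subseteq> V \<and> (\<forall>s\<in>snd st. s \<notin> fst st) \<and>
         (\<forall>i\<in>V - fst st. \<exists>s\<in>snd st. d i s \<le> 2 * NR V d k q i)"
  using assms(1)
proof (induction rule: rtranclp_induct)
  case base
  then show ?case by simp
next
  case (step y z)
  obtain P S where y: "y = (P, S)" by (cases y)
  from step(2) obtain s where s: "s \<in> P" and z: "z = ({i\<in>P. d i s > 2 * NR V d k q i}, insert s S)"
    unfolding alg2_step_def y by auto
  have IH: "P \<subseteq> V" "S \<subseteq> V" "\<forall>s\<in>S. s \<notin> P" "\<forall>i\<in>V - P. \<exists>s\<in>S. d i s \<le> 2 * NR V d k q i"
    using step(3) y by auto
  have sV: "s \<in> V" using s IH(1) by auto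
  have "\<not> d s s > 2 * NR V d k q s" using assms(2)[OF sV] assms(3) sV by auto
  hence sP': "s \<notin> {i\<in>P. d i s > 2 * NR V d k q i}" by blast
  have c4: "\<forall>i\<in>V - {i\<in>P. d i s > 2 * NR V d k q i}. \<exists>t\<in>insert s S. d i t \<le> 2 * NR V d k q i"
  proof
    fix i assume i: "i \<in> V - {i\<in>P. d i s > 2 * NR V d k q i}"
    show "\<exists>t\<in>insert s S. d i t \<le> 2 * NR V d k q i"
    proof (cases "i \<in> P")
      case True
      hence "d i s \<le> 2 * NR V d k q i" using i by simp
      thus ?thesis by blast
    next
      case False
      hence "i \<in> V - P" using i by blast
      thus ?thesis using IH(4) by blast
    qed
  qed
  have c1: "{i\<in>P. d i s > 2 * NR V d k q i} \<subseteq> V" using IH(1) by blast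
  have c2: "insert s S \<subseteq> V" using IH(2) sV by blast
  have c3: "\<forall>t\<in>insert s S. t \<notin> {i\<in>P. d i s > 2 * NR V d k q i}" using IH(3) sP' by blast
  show ?case unfolding z fst_conv snd_conv using c1 c2 c3 c4 by blast
qed

theorem lemma3:
  fixes V :: "'a set" and d :: "'a \<Rightarrow> 'a \<Rightarrow> real" and k q :: nat
    and S Out :: "'a set" and \<sigma> :: "'a \<Rightarrow> 'a"
  assumes "finite V" and "V \<noteq> {}"
    and "is_metric_on V d"
    and "k \<ge> 1" and "q < card V"
    and "alg2_output V d k q S Out \<sigma>"
  shows "fairness_ratio V d k q Out \<sigma> \<le> 2"
proof -
  have nn: "\<And>i. i \<in> V \<Longrightarrow> NR V d k q i \<ge> 0" using NR_nonneg[OF assms(1,3,4,5)] by blast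
  have met: "\<forall>i\<in>V. d i i = 0" "\<forall>i\<in>V. \<forall>j\<in>V. d i j \<ge> 0" "\<forall>i\<in>V. \<forall>j\<in>V. d i j = d j i"
    using assms(3) unfolding is_metric_on_def by auto
  have run: "(alg2_step V d k q)\<^sup>*\<^sup>* (V, {}) (Out, S)" and stop: "\<not> (Out \<noteq> {} \<and> card S < k)"
    and sig: "\<forall>i\<in>V - Out. \<sigma> i \<in> S \<and> (\<forall>h\<in>S. d i (\<sigma> i) \<le> d i h)"
    using assms(6) unfolding alg2_output_def alg2_centers_outliers_def by auto
  have I: "Out \<subseteq> V" "S \<subseteq> V" "\<forall>s\<in>S. s \<notin> Out" "\<forall>i\<in>V - Out. \<exists>s\<in>S. d i s \<le> 2 * NR V d k q i"
    using inv[OF run nn met(1)] by auto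
  have ne: "V - Out \<noteq> {}"
  proof (cases "Out = {}")
    case True then show ?thesis using assms(2) by simp
  next
    case False
    hence "card S \<ge> 1" using stop assms(4) by simp
    hence "S \<noteq> {}" by auto
    then obtain s where "s \<in> S" by auto
    then show ?thesis using I by auto
  qed
  have each: "d (\<sigma> i) i / NR V d k q i \<le> 2" if i: "i \<in> V - Out" for i
  proof -
    obtain s where s: "s \<in> S" "d i s \<le> 2 * NR V d k q i" using I(4) i by blast
    have "\<sigma> i \<in> V" using sig i I(2) by auto
    hence eq: "d (\<sigma> i) i = d i (\<sigma> i)" and ge: "d i (\<sigma> i) \<ge> 0" using met i by auto
    have le: "d i (\<sigma> i) \<le> 2 * NR V d k q i" using sig i s by force
    show ?thesis
    proof (cases "NR V d k q i > 0")
      case True then show ?thesis using le eq by (simp add: divide_le_eq)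
    next
      case False
      hence "NR V d k q i = 0" using nn i by force
      then show ?thesis by simp
    qed
  qed
  show ?thesis unfolding fairness_ratio_def
    using ne each assms(1) by (subst Max_le_iff) auto
qed

end
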